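(* Let $\phi$ be a parabolic holomorphic self-map of $\mathbb D$ of zero hyperbolic step. Then there do not exist a non-constant Bloch function $f$ and a unimodular number $\tau$ satisfying $f\circ\phi=\tau f$.
   Context: $\mathbb D$ is the open unit disk, $\mathbb T$ its boundary. For $n\in\mathbb N_0$, $\phi^{[n]}$ denotes the $n$-th iterate of $\phi$. The pseudo-hyperbolic distance is $\rho(z_1,z_2)=\left|\frac{z_2-z_1}{1-\overline{z_2}z_1}\right|$. A holomorphic self-map $\phi$ of $\mathbb D$ is of zero hyperbolic step if $\lim_{n\to\infty}\rho(\phi^{[n]}(z_0),\phi^{[n+1]}(z_0))=0$ for some (equivalently every) $z_0\in\mathbb D$. It is parabolic if its Denjoy--Wolff point lies on $\mathbb T$ and its angular derivative there equals $1$. A Bloch function is a holomorphic $f$ on $\mathbb D$ with $\sup_{z\in\mathbb D}(1-|z|^2)|f'(z)|<\infty$. *)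

theory Defs
  imports "HOL-Complex_Analysis.Complex_Analysis"
begin

definition self_map_disk :: "(complex \<Rightarrow> complex) \<Rightarrow> bool" where
  "self_map_disk \<phi> \<longleftrightarrow> \<phi> holomorphic_on ball 0 1 \<and> \<phi> ` ball 0 1 \<subseteq> ball 0 1"

definition pseudo_hyp :: "complex \<Rightarrow> complex \<Rightarrow> real" where
  "pseudo_hyp z1 z2 = cmod ((z2 - z1) / (1 - cnj z2 * z1))"

definition stolz_angle :: "complex \<Rightarrow> real \<Rightarrow> complex set" where
  "stolz_angle w M = {z \<in> ball 0 1. cmod (w - z) \<le> M * (1 - cmod z)}"

definition angular_limit :: "(complex \<Rightarrow> complex) \<Rightarrow> complex \<Rightarrow> complex \<Rightarrow> bool" where
  "angular_limit g w L \<longleftrightarrow> (\<forall>M>1. (g \<longlongrightarrow> L) (at w within stolz_angle w M))"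

definition boundary_DW_point :: "(complex \<Rightarrow> complex) \<Rightarrow> complex \<Rightarrow> bool" where
  "boundary_DW_point \<phi> w \<longleftrightarrow> cmod w = 1 \<and>
     (\<forall>z\<in>ball 0 1. (\<lambda>n. (\<phi> ^^ n) z) \<longlonglongrightarrow> w)"

definition angular_derivative_at :: "(complex \<Rightarrow> complex) \<Rightarrow> complex \<Rightarrow> complex \<Rightarrow> bool" where
  "angular_derivative_at \<phi> w d \<longleftrightarrow>
     angular_limit \<phi> w w \<and> angular_limit (\<lambda>z. (\<phi> z - w) / (z - w)) w d"

definition parabolic :: "(complex \<Rightarrow> complex) \<Rightarrow> bool" where
  "parabolic \<phi> \<longleftrightarrow> self_map_disk \<phi> \<and>
     (\<exists>w. boundary_DW_point \<phi> w \<and> angular_derivative_at \<phi> w 1)"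

definition zero_hyperbolic_step :: "(complex \<Rightarrow> complex) \<Rightarrow> bool" where
  "zero_hyperbolic_step \<phi> \<longleftrightarrow>
     (\<exists>z0\<in>ball 0 1. (\<lambda>n. pseudo_hyp ((\<phi> ^^ n) z0) ((\<phi> ^^ Suc n) z0)) \<longlonglongrightarrow> 0)"

definition bloch :: "(complex \<Rightarrow> complex) \<Rightarrow> bool" where
  "bloch f \<longleftrightarrow> f holomorphic_on ball 0 1 \<and>
     bdd_above ((\<lambda>z. (1 - (cmod z)\<^sup>2) * cmod (deriv f z)) ` ball 0 1)"

end

theory Submission
  imports Defs "HOL-Complex_Analysis.Complex_Analysis"
begin

definition mb :: "complex \<Rightarrow> complex \<Rightarrow> complex" where
  "mb a z = (z - a) / (1 - cnj a * z)"

lemma mb_denom: assumes "cmod a < 1" "cmod z < 1" shows "1 - cnj a * z \<noteq> 0"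
proof
  assume "1 - cnj a * z = 0"
  hence "cmod (cnj a * z) = 1" by (metis eq_iff_diff_eq_0 norm_one)
  moreover have "cmod (cnj a * z) < 1" using assms
    by (simp add: norm_mult) (metis mult_strict_mono' norm_ge_zero mult_1 less_le_trans mult_less_cancel_right1 le_less)
  ultimately show False by simp
qed

lemma mb_in: "cmod a < 1 \<Longrightarrow> cmod z < 1 \<Longrightarrow> cmod (mb a z) < 1"
  using Moebius_function_norm_lt_1[of a z 0] by (simp add: mb_def Moebius_function_simple)

lemma mb_hol: "cmod a < 1 \<Longrightarrow> mb a holomorphic_on ball 0 1"
  using Moebius_function_holomorphic[of a 0]
  by (simp add: mb_def [abs_def] Moebius_function_simple [abs_def])

lemma mb_inv: "cmod a < 1 \<Longrightarrow> cmod z < 1 \<Longrightarrow> mb (-a) (mb a z) = z"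
  using Moebius_function_compose[of "-a" a z]
  by (simp add: mb_def Moebius_function_simple)

lemma mb_deriv: assumes "cmod a < 1" "cmod z < 1"
  shows "deriv (mb a) z = (1 - cnj a * a) / (1 - cnj a * z)^2"
proof -
  have d: "1 - cnj a * z \<noteq> 0" using mb_denom assms .
  have h: "((\<lambda>z. (z - a) / (1 - cnj a * z)) has_field_derivative ((1 - cnj a * z) - (z - a) * (- cnj a)) / (1 - cnj a * z)^2) (at z)"
    using d by (auto intro!: derivative_eq_intros simp: power2_eq_square)
  have e: "((1 - cnj a * z) - (z - a) * (- cnj a)) = 1 - cnj a * a" by (simp add: algebra_simps)
  have "(mb a has_field_derivative (1 - cnj a * a) / (1 - cnj a * z)^2) (at z)"
    unfolding mb_def[abs_def] e[symmetric] by (rule h)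
  thus ?thesis by (rule DERIV_imp_deriv)
qed

lemma pseudo_hyp_mb: "pseudo_hyp z1 z2 = cmod (mb z1 z2)"
proof -
  have "cmod (1 - cnj z2 * z1) = cmod (1 - cnj z1 * z2)"
    by (metis complex_cnj_cnj complex_cnj_diff complex_cnj_mult complex_cnj_one complex_mod_cnj mult.commute)
  thus ?thesis by (simp add: pseudo_hyp_def mb_def norm_divide)
qed

lemma pseudo_hyp_sym: "pseudo_hyp z1 z2 = pseudo_hyp z2 z1"
proof -
  have "cmod (1 - cnj z2 * z1) = cmod (1 - cnj z1 * z2)"
    by (metis complex_cnj_cnj complex_cnj_diff complex_cnj_mult complex_cnj_one complex_mod_cnj mult.commute)
  moreover have "cmod (z2 - z1) = cmod (z1 - z2)" by (simp add: norm_minus_commute)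
  ultimately show ?thesis by (simp add: pseudo_hyp_def norm_divide)
qed

lemma pseudo_hyp_zero: assumes "cmod z1 < 1" "cmod z2 < 1" "pseudo_hyp z1 z2 = 0" shows "z1 = z2"
  using assms mb_denom[OF assms(1,2)] by (simp add: pseudo_hyp_mb mb_def)

lemma normalized:
  assumes hol: "G holomorphic_on ball 0 1" and G0: "G 0 = 0"
    and no: "\<And>z. cmod z < 1 \<Longrightarrow> cmod (G z) < 1"
    and z: "cmod \<zeta> < 1" "\<zeta> \<noteq> 0"
  shows "cmod (deriv G 0 - G \<zeta> / \<zeta>) \<le> 3 * cmod \<zeta>"
proof -
  obtain h where holh: "h holomorphic_on ball 0 1" and Gh: "\<And>z. cmod z < 1 \<Longrightarrow> G z = z * h z"
     and d0: "deriv G 0 = h 0"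
    using Schwarz3[OF hol G0] by blast
  have hb: "cmod (h x) \<le> 1" if "cmod x < 1" for x
  proof (cases "x = 0")
    case True thus ?thesis using Schwarz_Lemma(2)[OF hol G0 no, of 0] d0 by simp
  next
    case False
    have "cmod (G x) \<le> cmod x" using Schwarz_Lemma(1)[OF hol G0 no that] .
    thus ?thesis using Gh[OF that] False by (simp add: norm_mult)
  qed
  define u where "u x = (h x - h 0) / 3" for x
  have holu: "u holomorphic_on ball 0 1" unfolding u_def [abs_def]
    by (intro holomorphic_intros holh) simp
  have u0: "u 0 = 0" by (simp add: u_def)
  have nu: "cmod (u x) < 1" if "cmod x < 1" for x
  proof -
    have "cmod (h x - h 0) \<le> 2" using hb[OF that] hb[of 0]
      by (metis norm_triangle_ineq4 one_add_one add_mono order_trans norm_zero zero_less_one)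
    thus ?thesis by (simp add: u_def norm_divide)
  qed
  have "cmod (u \<zeta>) \<le> cmod \<zeta>" using Schwarz_Lemma(1)[OF holu u0 nu z(1)] .
  hence "cmod (h \<zeta> - h 0) \<le> 3 * cmod \<zeta>" by (simp add: u_def norm_divide)
  moreover have "G \<zeta> / \<zeta> = h \<zeta>" using Gh[OF z(1)] z(2) by simp
  ultimately show ?thesis using d0 by (simp add: norm_minus_commute)
qed

definition selfm :: "(complex \<Rightarrow> complex) \<Rightarrow> bool" where
  "selfm g \<longleftrightarrow> g holomorphic_on ball 0 1 \<and> (\<forall>z. cmod z < 1 \<longrightarrow> cmod (g z) < 1)"

definition lam :: "(complex \<Rightarrow> complex) \<Rightarrow> complex \<Rightarrow> real" where
  "lam g z = (1 - (cmod z)^2) * cmod (deriv g z) / (1 - (cmod (g z))^2)"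

lemma transfer:
  assumes sg: "selfm g" and p: "cmod p < 1" and q: "cmod q < 1"
  shows "lam g q \<le> 1" "pseudo_hyp (g q) (g p) \<le> pseudo_hyp q p"
    "pseudo_hyp q p > 0 \<Longrightarrow> \<bar>lam g q - pseudo_hyp (g q) (g p) / pseudo_hyp q p\<bar> \<le> 3 * pseudo_hyp q p"
proof -
  have holg: "g holomorphic_on ball 0 1" and gin: "\<And>z. cmod z < 1 \<Longrightarrow> cmod (g z) < 1"
    using sg by (auto simp: selfm_def)
  define b where "b = g q"
  have b: "cmod b < 1" using gin[OF q] b_def by simp
  define G where "G = mb b \<circ> g \<circ> mb (-q)"
  have mq0: "mb (-q) 0 = q" by (simp add: mb_def)
  have mqin: "mb (-q) ` ball 0 1 \<subseteq> ball 0 1" using mb_in[of "-q"] q by auto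
  have gin': "g ` ball 0 1 \<subseteq> ball 0 1" using gin by auto
  have holG: "G holomorphic_on ball 0 1" unfolding G_def
  proof (rule holomorphic_on_compose_gen[where t="ball 0 1"])
    show "mb b \<circ> g holomorphic_on ball 0 1"
      by (rule holomorphic_on_compose_gen[where t="ball 0 1"]) (use holg gin' mb_hol[OF b] in auto)
  qed (use mb_hol[of "-q"] q mqin in auto)
  have G0: "G 0 = 0" by (simp add: G_def mq0 b_def mb_def)
  have Gin: "cmod (G z) < 1" if "cmod z < 1" for z
    using that by (simp add: G_def mb_in b gin q)
  have fd: "f field_differentiable at x" if "f holomorphic_on ball 0 1" "cmod x < 1" for f x
    using that by (meson holomorphic_on_imp_differentiable_at mem_ball_0 open_ball)
  have "deriv G 0 = deriv (mb b) (g (mb (-q) 0)) * deriv (g \<circ> mb (-q)) 0"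
    unfolding G_def comp_assoc
    apply (subst deriv_chain)
      apply (rule field_differentiable_compose[where f="mb (-q)"])
    using fd[OF mb_hol[of "-q"]] fd[OF holg] fd[OF mb_hol[OF b]] q mb_in[of "-q" 0] gin[of "mb (-q) 0"]
    by (auto simp: mq0)
  also have "deriv (g \<circ> mb (-q)) 0 = deriv g q * deriv (mb (-q)) 0"
    apply (subst deriv_chain)
    using fd[OF mb_hol[of "-q"]] fd[OF holg] q by (auto simp: mq0)
  finally have dG0: "deriv G 0 = deriv (mb b) b * (deriv g q * deriv (mb (-q)) 0)"
    by (simp add: mq0 b_def)
  have D: "1 - cnj b * b \<noteq> 0" using mb_denom[OF b b] .
  have d1: "deriv (mb b) b = 1 / (1 - cnj b * b)"
    using mb_deriv[OF b b] D by (simp add: power2_eq_square)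
  have d2: "deriv (mb (-q)) 0 = 1 - cnj q * q"
    using mb_deriv[of "-q" 0] q by simp
  have dG: "deriv G 0 = deriv g q * ((1 - cnj q * q) / (1 - cnj b * b))"
    unfolding dG0 d1 d2 by simp
  have cq: "cnj q * q = of_real ((cmod q)^2)" by (metis complex_norm_square mult.commute of_real_power)
  have cb: "cnj b * b = of_real ((cmod b)^2)" by (metis complex_norm_square mult.commute of_real_power)
  have q2: "(cmod q)^2 < 1" using q by (simp add: power_less_one_iff abs_square_less_1)
  have b2: "(cmod b)^2 < 1" using b by (simp add: abs_square_less_1)
  have nq: "cmod (1 - cnj q * q) = 1 - (cmod q)^2"
  proof -
    have "1 - cnj q * q = of_real (1 - (cmod q)^2)" by (simp add: cq)
    thus ?thesis using q2 by (metis norm_of_real abs_of_pos diff_gt_0_iff_gt)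
  qed
  have nb: "cmod (1 - cnj b * b) = 1 - (cmod b)^2"
  proof -
    have "1 - cnj b * b = of_real (1 - (cmod b)^2)" by (simp add: cb)
    thus ?thesis using b2 by (metis norm_of_real abs_of_pos diff_gt_0_iff_gt)
  qed
  have ndG: "cmod (deriv G 0) = lam g q"
    unfolding dG lam_def b_def[symmetric] norm_mult norm_divide nq nb by simp
  show "lam g q \<le> 1" using Schwarz_Lemma(2)[OF holG G0 Gin, of 0] ndG by simp
  define \<zeta> where "\<zeta> = mb q p"
  have z1: "cmod \<zeta> < 1" using mb_in q p \<zeta>_def by simp
  have Gz: "G \<zeta> = mb b (g p)" by (simp add: G_def \<zeta>_def mb_inv q p)
  have nz: "cmod \<zeta> = pseudo_hyp q p" by (simp add: \<zeta>_def pseudo_hyp_mb)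
  have nGz: "cmod (G \<zeta>) = pseudo_hyp (g q) (g p)" by (simp add: Gz pseudo_hyp_mb b_def)
  show "pseudo_hyp (g q) (g p) \<le> pseudo_hyp q p"
    using Schwarz_Lemma(1)[OF holG G0 Gin z1] nz nGz by simp
  assume "pseudo_hyp q p > 0"
  hence z0: "\<zeta> \<noteq> 0" using nz by auto
  have "cmod (deriv G 0 - G \<zeta> / \<zeta>) \<le> 3 * cmod \<zeta>" by (rule normalized[OF holG G0 Gin z1 z0])
  moreover have "\<bar>cmod (deriv G 0) - cmod (G \<zeta> / \<zeta>)\<bar> \<le> cmod (deriv G 0 - G \<zeta> / \<zeta>)"
    by (rule norm_triangle_ineq3)
  ultimately show "\<bar>lam g q - pseudo_hyp (g q) (g p) / pseudo_hyp q p\<bar> \<le> 3 * pseudo_hyp q p"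
    using ndG nz nGz by (simp add: norm_divide)
qed


lemma selfm_funpow: assumes "selfm \<phi>" shows "selfm (\<phi> ^^ n)"
proof (induction n)
  case 0 thus ?case by (simp add: selfm_def id_def)
next
  case (Suc n)
  have a: "(\<phi> ^^ n) holomorphic_on ball 0 1" "\<And>z. cmod z < 1 \<Longrightarrow> cmod ((\<phi> ^^ n) z) < 1"
    using Suc by (auto simp: selfm_def)
  have b: "\<phi> holomorphic_on ball 0 1" "\<And>z. cmod z < 1 \<Longrightarrow> cmod (\<phi> z) < 1"
    using assms by (auto simp: selfm_def)
  have "(\<phi> \<circ> (\<phi> ^^ n)) holomorphic_on ball 0 1"
    by (rule holomorphic_on_compose_gen[where t="ball 0 1"]) (use a b in auto)
  moreover have "\<forall>z. cmod z < 1 \<longrightarrow> cmod ((\<phi> \<circ> (\<phi> ^^ n)) z) < 1" using a b by simp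
  moreover have e: "\<phi> ^^ Suc n = \<phi> \<circ> (\<phi> ^^ n)" by simp
  ultimately show ?case unfolding selfm_def e by blast
qed

lemma selfm_fd: "selfm g \<Longrightarrow> cmod x < 1 \<Longrightarrow> g field_differentiable at x"
  unfolding selfm_def by (meson holomorphic_on_imp_differentiable_at mem_ball_0 open_ball)

lemma lam_nonneg: assumes "selfm g" "cmod z < 1" shows "0 \<le> lam g z"
proof -
  have "cmod (g z) < 1" using assms by (auto simp: selfm_def)
  hence "(cmod (g z))^2 < 1" by (simp add: abs_square_less_1)
  moreover have "(cmod z)^2 < 1" using assms by (simp add: abs_square_less_1)
  ultimately show ?thesis by (simp add: lam_def)
qed

lemma lam_chain: assumes g: "selfm g" and h: "selfm h" and z: "cmod z < 1"
  shows "lam (h \<circ> g) z = lam h (g z) * lam g z"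
proof -
  have gz: "cmod (g z) < 1" using g z by (auto simp: selfm_def)
  have d: "deriv (h \<circ> g) z = deriv h (g z) * deriv g z"
    by (rule deriv_chain) (use selfm_fd[OF g z] selfm_fd[OF h gz] in auto)
  have "(cmod (g z))^2 < 1" using gz by (simp add: abs_square_less_1)
  hence "1 - (cmod (g z))^2 \<noteq> 0" by simp
  hence alg: "A * (x * y) / C = (Bq * x / C) * (A * y / Bq)" if "Bq = 1 - (cmod (g z))^2" for A x y C Bq :: real
    using that by (simp add: field_simps)
  show ?thesis unfolding lam_def d norm_mult comp_apply by (rule alg) simp
qed

lemma iter_chain: assumes "selfm \<phi>" "cmod z < 1"
  shows "lam (\<phi> ^^ (j + n)) z = lam (\<phi> ^^ j) ((\<phi> ^^ n) z) * lam (\<phi> ^^ n) z"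
  unfolding funpow_add using lam_chain[OF selfm_funpow[OF assms(1)] selfm_funpow[OF assms(1)] assms(2)] .


lemma Z_add: "(\<phi> ^^ j) ((\<phi> ^^ k) z) = (\<phi> ^^ (j + k)) z"
  by (simp add: funpow_add)

lemma posstep:
  assumes sp: "selfm \<phi>" and z0: "cmod z0 < 1" and w: "cmod w = 1"
    and lim: "(\<lambda>n. (\<phi> ^^ n) z0) \<longlonglongrightarrow> w"
  shows "pseudo_hyp ((\<phi> ^^ k) z0) ((\<phi> ^^ Suc k) z0) > 0"
proof (rule ccontr)
  assume "\<not> ?thesis"
  hence "pseudo_hyp ((\<phi> ^^ k) z0) ((\<phi> ^^ Suc k) z0) = 0"
    by (simp add: pseudo_hyp_def)
  moreover have "cmod ((\<phi> ^^ n) z0) < 1" for n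
    using selfm_funpow[OF sp, of n] z0 by (auto simp: selfm_def)
  ultimately have e: "(\<phi> ^^ k) z0 = (\<phi> ^^ Suc k) z0" using pseudo_hyp_zero by blast
  have c: "(\<phi> ^^ (i + k)) z0 = (\<phi> ^^ k) z0" for i
  proof (induction i)
    case (Suc i)
    have "(\<phi> ^^ (Suc i + k)) z0 = \<phi> ((\<phi> ^^ (i + k)) z0)" by simp
    also have "\<dots> = \<phi> ((\<phi> ^^ k) z0)" using Suc by simp
    also have "\<dots> = (\<phi> ^^ k) z0" using e by simp
    finally show ?case .
  qed simp
  have "(\<lambda>n. (\<phi> ^^ (n + k)) z0) \<longlonglongrightarrow> w"
    using LIMSEQ_ignore_initial_segment[OF lim, of k] .
  hence "(\<lambda>n. (\<phi> ^^ k) z0) \<longlonglongrightarrow> w" using c by simp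
  hence "(\<phi> ^^ k) z0 = w" using LIMSEQ_const_iff by blast
  thus False using w \<open>cmod ((\<phi> ^^ k) z0) < 1\<close> by simp
qed

lemma stepZ:
  assumes sp: "selfm \<phi>" and z0: "cmod z0 < 1"
    and lim: "(\<lambda>n. pseudo_hyp ((\<phi> ^^ n) z0) ((\<phi> ^^ Suc n) z0)) \<longlonglongrightarrow> 0"
    and pos: "\<And>k. pseudo_hyp ((\<phi> ^^ k) z0) ((\<phi> ^^ Suc k) z0) > 0"
    and eta: "\<eta> > 0"
  shows "\<exists>j. lam (\<phi> ^^ j) ((\<phi> ^^ m) z0) < \<eta>"
proof -
  define s where "s n = pseudo_hyp ((\<phi> ^^ n) z0) ((\<phi> ^^ Suc n) z0)" for n
  have Zin: "cmod ((\<phi> ^^ n) z0) < 1" for n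
    using selfm_funpow[OF sp, of n] z0 by (auto simp: selfm_def)
  obtain N where N: "\<And>n. n \<ge> N \<Longrightarrow> norm (s n - 0) < \<eta> / 4"
    using LIMSEQ_D[OF lim[folded s_def], of "\<eta>/4"] eta by auto
  define k where "k = max m N"
  define r where "r = s k"
  have r0: "r > 0" using pos by (simp add: r_def s_def)
  have r1: "r < \<eta> / 4" using N[of k] r0 by (simp add: r_def k_def)
  obtain N' where N': "\<And>n. n \<ge> N' \<Longrightarrow> norm (s n - 0) < r * \<eta> / 4"
    using LIMSEQ_D[OF lim[folded s_def], of "r * \<eta>/4"] eta r0 by auto
  define j where "j = N'"
  have e: "s (j + k) < r * \<eta> / 4" using N'[of "j+k"] pos[of "j+k"] by (simp add: j_def s_def)
  have tr: "\<bar>lam (\<phi> ^^ j) ((\<phi> ^^ k) z0) - pseudo_hyp ((\<phi> ^^ j) ((\<phi> ^^ k) z0)) ((\<phi> ^^ j) ((\<phi> ^^ Suc k) z0)) / r\<bar> \<le> 3 * r"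
    using transfer(3)[OF selfm_funpow[OF sp, of j] Zin[of "Suc k"] Zin[of k]] r0
    by (simp add: r_def s_def)
  have eqs: "pseudo_hyp ((\<phi> ^^ j) ((\<phi> ^^ k) z0)) ((\<phi> ^^ j) ((\<phi> ^^ Suc k) z0)) = s (j + k)"
    unfolding s_def Z_add by simp
  have tr2: "lam (\<phi> ^^ j) ((\<phi> ^^ k) z0) \<le> s (j + k) / r + 3 * r" using tr unfolding eqs by linarith
  have "s (j + k) / r < \<eta> / 4" using e r0 by (simp add: divide_less_eq mult.commute)
  hence L: "lam (\<phi> ^^ j) ((\<phi> ^^ k) z0) < \<eta>" using tr2 r1 by linarith
  have km: "(\<phi> ^^ (k - m)) ((\<phi> ^^ m) z0) = (\<phi> ^^ k) z0"
    by (simp add: Z_add k_def)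
  have "lam (\<phi> ^^ (j + (k - m))) ((\<phi> ^^ m) z0) = lam (\<phi> ^^ j) ((\<phi> ^^ k) z0) * lam (\<phi> ^^ (k - m)) ((\<phi> ^^ m) z0)"
    using iter_chain[OF sp Zin[of m], of j "k - m"] km by simp
  also have "\<dots> \<le> lam (\<phi> ^^ j) ((\<phi> ^^ k) z0) * 1"
    by (rule mult_left_mono) (use transfer(1)[OF selfm_funpow[OF sp, of "k-m"] Zin[of m] Zin[of m]]
        lam_nonneg[OF selfm_funpow[OF sp, of j] Zin[of k]] in auto)
  finally have "lam (\<phi> ^^ (j + (k - m))) ((\<phi> ^^ m) z0) < \<eta>" using L by simp
  thus ?thesis by blast
qed


lemma stepW:
  assumes sp: "selfm \<phi>" and z0: "cmod z0 < 1"
    and lim: "(\<lambda>n. pseudo_hyp ((\<phi> ^^ n) z0) ((\<phi> ^^ Suc n) z0)) \<longlonglongrightarrow> 0"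
    and pos: "\<And>k. pseudo_hyp ((\<phi> ^^ k) z0) ((\<phi> ^^ Suc k) z0) > 0"
    and w: "cmod w < 1" and wz: "pseudo_hyp z0 w < 1/16"
  shows "\<exists>n. lam (\<phi> ^^ n) w \<le> (1/2)^K"
proof (induction K)
  case 0
  show ?case using transfer(1)[OF selfm_funpow[OF sp, of 0] w w] by (intro exI[of _ 0]) (simp add: id_def)
next
  case (Suc K)
  then obtain n where n: "lam (\<phi> ^^ n) w \<le> (1/2)^K" by blast
  have Zin: "cmod ((\<phi> ^^ n) z) < 1" if "cmod z < 1" for n z
    using selfm_funpow[OF sp, of n] that by (auto simp: selfm_def)
  define zn where "zn = (\<phi> ^^ n) z0"
  define wn where "wn = (\<phi> ^^ n) w"
  have zn: "cmod zn < 1" and wn: "cmod wn < 1" using Zin z0 w by (auto simp: zn_def wn_def)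
  define r where "r = pseudo_hyp zn wn"
  have r16: "r < 1/16" using transfer(2)[OF selfm_funpow[OF sp, of n] w z0] wz
    by (simp add: r_def zn_def wn_def)
  obtain j where j: "lam (\<phi> ^^ j) zn < 1/8" using stepZ[OF sp z0 lim pos, of "1/8" n] by (auto simp: zn_def)
  define g where "g = \<phi> ^^ j"
  have sg: "selfm g" using selfm_funpow[OF sp] by (simp add: g_def)
  have half: "lam g wn \<le> 1/2"
  proof (cases "r > 0")
    case False
    hence "r = 0" using r_def pseudo_hyp_def by (metis norm_ge_zero order_less_le)
    hence "zn = wn" using pseudo_hyp_zero[OF zn wn] r_def by simp
    thus ?thesis using j by (simp add: g_def)
  next
    case True
    define e where "e = pseudo_hyp (g zn) (g wn)"
    have t1: "\<bar>lam g zn - e / r\<bar> \<le> 3 * r"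
      using transfer(3)[OF sg wn zn] True by (simp add: e_def r_def)
    have t2: "\<bar>lam g wn - e / r\<bar> \<le> 3 * r"
      using transfer(3)[OF sg zn wn] True pseudo_hyp_sym[of zn wn] pseudo_hyp_sym[of "g zn" "g wn"]
      by (simp add: e_def r_def)
    have "lam g zn < 1/8" using j by (simp add: g_def)
    thus ?thesis using t1 t2 r16 by linarith
  qed
  have "lam (\<phi> ^^ (j + n)) w = lam g wn * lam (\<phi> ^^ n) w"
    using iter_chain[OF sp w, of j n] by (simp add: g_def wn_def)
  also have "\<dots> \<le> (1/2) * (1/2)^K"
    by (rule mult_mono) (use half n lam_nonneg[OF sp[THEN selfm_funpow] w] in auto)
  finally show ?case by auto
qed

lemma bloch_bound:
  assumes sp: "selfm \<phi>" and holf: "f holomorphic_on ball 0 1"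
    and B: "\<And>z. cmod z < 1 \<Longrightarrow> (1 - (cmod z)^2) * cmod (deriv f z) \<le> B"
    and feq: "\<And>z. cmod z < 1 \<Longrightarrow> f (\<phi> z) = \<tau> * f z" and tau: "cmod \<tau> = 1"
    and w: "cmod w < 1"
  shows "(1 - (cmod w)^2) * cmod (deriv f w) \<le> B * lam (\<phi> ^^ n) w"
proof -
  have Zin: "cmod ((\<phi> ^^ n) z) < 1" if "cmod z < 1" for n z
    using selfm_funpow[OF sp, of n] that by (auto simp: selfm_def)
  have fe: "f ((\<phi> ^^ n) z) = \<tau> ^ n * f z" if "cmod z < 1" for z
  proof (induction n)
    case (Suc n)
    have "f ((\<phi> ^^ Suc n) z) = f (\<phi> ((\<phi> ^^ n) z))" by simp
    also have "\<dots> = \<tau> * f ((\<phi> ^^ n) z)" using feq Zin that by blast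
    finally show ?case using Suc by simp
  qed simp
  have fdf: "f field_differentiable at x" if "cmod x < 1" for x
    using holf that by (meson holomorphic_on_imp_differentiable_at mem_ball_0 open_ball)
  define wn where "wn = (\<phi> ^^ n) w"
  have wn: "cmod wn < 1" using Zin w wn_def by simp
  have "deriv (f \<circ> (\<phi> ^^ n)) w = deriv (\<lambda>z. \<tau> ^ n * f z) w"
  proof (rule deriv_cong_ev)
    have "eventually (\<lambda>x. x \<in> ball 0 1) (nhds w)"
      using w by (intro eventually_nhds_in_open) auto
    thus "eventually (\<lambda>x. (f \<circ> (\<phi> ^^ n)) x = \<tau> ^ n * f x) (nhds w)"
      by (rule eventually_mono) (simp add: fe)
  qed simp
  also have "\<dots> = \<tau> ^ n * deriv f w" using fdf[OF w] by simp
  finally have "\<tau> ^ n * deriv f w = deriv f wn * deriv (\<phi> ^^ n) w"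
    using deriv_chain[OF selfm_fd[OF selfm_funpow[OF sp, of n] w] fdf[OF wn[unfolded wn_def]]] by (simp add: wn_def)
  hence nd: "cmod (deriv f w) = cmod (deriv f wn) * cmod (deriv (\<phi> ^^ n) w)"
    by (metis norm_mult norm_power tau power_one mult_1)
  have w2: "(cmod wn)^2 < 1" using wn by (simp add: abs_square_less_1)
  have "(1 - (cmod w)^2) * cmod (deriv f w) = ((1 - (cmod wn)^2) * cmod (deriv f wn)) * lam (\<phi> ^^ n) w"
    unfolding nd lam_def wn_def[symmetric] using w2 by (simp add: field_simps)
  also have "\<dots> \<le> B * lam (\<phi> ^^ n) w"
    by (rule mult_right_mono) (use B[OF wn] lam_nonneg[OF selfm_funpow[OF sp] w] in auto)
  finally show ?thesis .
qed


lemma ph_bound: assumes z0: "cmod z0 < 1" and w: "cmod w \<le> 1"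
  shows "pseudo_hyp z0 w \<le> cmod (w - z0) / (1 - cmod z0)"
proof -
  have "cmod (cnj w * z0) \<le> cmod z0" using w
    by (simp add: norm_mult) (metis mult_left_le_one_le norm_ge_zero)
  hence a: "1 - cmod z0 \<le> cmod (1 - cnj w * z0)"
    using norm_triangle_ineq2[of 1 "cnj w * z0"] by simp
  have p1: "0 < 1 - cmod z0" using z0 by simp
  have p2: "0 < cmod (1 - cnj w * z0)" using a p1 by linarith
  have "cmod (w - z0) / cmod (1 - cnj w * z0) \<le> cmod (w - z0) / (1 - cmod z0)"
    by (rule divide_left_mono[OF a]) (use mult_pos_pos[OF p2 p1] in auto)
  thus ?thesis by (simp add: pseudo_hyp_def norm_divide)
qed

theorem theorem5p3:
  fixes \<phi> :: "complex \<Rightarrow> complex"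
  assumes "self_map_disk \<phi>" and "parabolic \<phi>" and "zero_hyperbolic_step \<phi>"
  shows "\<not> (\<exists>f \<tau>. bloch f \<and> (\<exists>z1\<in>ball 0 1. \<exists>z2\<in>ball 0 1. f z1 \<noteq> f z2) \<and>
              cmod \<tau> = 1 \<and> (\<forall>z\<in>ball 0 1. f (\<phi> z) = \<tau> * f z))"
proof
  assume "\<exists>f \<tau>. bloch f \<and> (\<exists>z1\<in>ball 0 1. \<exists>z2\<in>ball 0 1. f z1 \<noteq> f z2) \<and>
              cmod \<tau> = 1 \<and> (\<forall>z\<in>ball 0 1. f (\<phi> z) = \<tau> * f z)"
  then obtain f \<tau> z1 z2 where bl: "bloch f" and z1: "z1 \<in> ball 0 1" and z2: "z2 \<in> ball 0 1"
    and ne: "f z1 \<noteq> f z2" and tau: "cmod \<tau> = 1" and feq: "\<forall>z\<in>ball 0 1. f (\<phi> z) = \<tau> * f z"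
    by blast
  have sp: "selfm \<phi>" using assms(1) unfolding self_map_disk_def selfm_def by (auto simp: image_subset_iff)
  obtain wd where "boundary_DW_point \<phi> wd" using assms(2) by (auto simp: parabolic_def)
  hence wd1: "cmod wd = 1" and conv: "\<And>z. z \<in> ball 0 1 \<Longrightarrow> (\<lambda>n. (\<phi> ^^ n) z) \<longlonglongrightarrow> wd"
    by (auto simp: boundary_DW_point_def)
  obtain z0 where z0: "z0 \<in> ball 0 1"
    and lim: "(\<lambda>n. pseudo_hyp ((\<phi> ^^ n) z0) ((\<phi> ^^ Suc n) z0)) \<longlonglongrightarrow> 0"
    using assms(3) by (auto simp: zero_hyperbolic_step_def)
  have z0n: "cmod z0 < 1" using z0 by simp
  have pos: "\<And>k. pseudo_hyp ((\<phi> ^^ k) z0) ((\<phi> ^^ Suc k) z0) > 0"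
    using posstep[OF sp z0n wd1 conv[OF z0]] .
  have holf: "f holomorphic_on ball 0 1" using bl by (simp add: bloch_def)
  obtain B where B0: "\<forall>x\<in>ball 0 1. (1 - (cmod x)^2) * cmod (deriv f x) \<le> B"
    using bl unfolding bloch_def bdd_above_def by auto
  have B: "\<And>z. cmod z < 1 \<Longrightarrow> (1 - (cmod z)^2) * cmod (deriv f z) \<le> B"
    using B0 by auto
  have feq': "\<And>z. cmod z < 1 \<Longrightarrow> f (\<phi> z) = \<tau> * f z" using feq by simp
  have d0: "deriv f w = 0" if w: "cmod w < 1" and wz: "pseudo_hyp z0 w < 1/16" for w
  proof -
    define v where "v = (1 - (cmod w)^2) * cmod (deriv f w)"
    have w2: "(cmod w)^2 < 1" using w by (simp add: abs_square_less_1)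
    have "v \<le> 0"
    proof (rule ccontr)
      assume "\<not> v \<le> 0"
      hence vp: "v > 0" by simp
      define \<eta> where "\<eta> = v / (\<bar>B\<bar> + 1)"
      have ep: "\<eta> > 0" using vp by (simp add: \<eta>_def)
      obtain K :: nat where K: "(1/2)^K < \<eta>" using real_arch_pow_inv[OF ep, of "1/2"] by auto
      obtain n where n: "lam (\<phi> ^^ n) w \<le> (1/2)^K" using stepW[OF sp z0n lim pos w wz] by blast
      have ln: "0 \<le> lam (\<phi> ^^ n) w" using lam_nonneg[OF selfm_funpow[OF sp] w] .
      have "v \<le> B * lam (\<phi> ^^ n) w"
        using bloch_bound[OF sp holf B feq' tau w, of n] by (simp add: v_def)
      also have "\<dots> \<le> \<bar>B\<bar> * lam (\<phi> ^^ n) w" using ln by (simp add: mult_right_mono)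
      also have "\<dots> \<le> \<bar>B\<bar> * \<eta>" using n K ln by (intro mult_left_mono) auto
      also have "\<dots> < v"
      proof -
        have "\<bar>B\<bar> * \<eta> = v * (\<bar>B\<bar> / (\<bar>B\<bar> + 1))" by (simp add: \<eta>_def field_simps)
        also have "\<dots> < v * 1" using vp by (intro mult_strict_left_mono) auto
        finally show ?thesis by simp
      qed
      finally show False by simp
    qed
    moreover have "0 < 1 - (cmod w)^2" using w2 by simp
    ultimately have "cmod (deriv f w) \<le> 0" unfolding v_def
      by (simp add: mult_le_0_iff)
    thus ?thesis by simp
  qed
  define \<delta> where "\<delta> = (1 - cmod z0) / 16"
  have dp: "\<delta> > 0" using z0n by (simp add: \<delta>_def)
  have inU: "cmod w < 1" "pseudo_hyp z0 w < 1/16" if "w \<in> ball z0 \<delta>" for w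
  proof -
    have d: "cmod (w - z0) < \<delta>" using that by (simp add: dist_norm norm_minus_commute)
    have "cmod w \<le> cmod z0 + cmod (w - z0)" by (metis add.commute diff_add_cancel norm_triangle_ineq)
    thus "cmod w < 1" using d z0n by (simp add: \<delta>_def)
    hence "pseudo_hyp z0 w \<le> cmod (w - z0) / (1 - cmod z0)" using ph_bound[OF z0n] by simp
    also have "\<dots> < \<delta> / (1 - cmod z0)" using d z0n by (intro divide_strict_right_mono) auto
    also have "\<dots> = 1/16" using z0n by (simp add: \<delta>_def)
    finally show "pseudo_hyp z0 w < 1/16" .
  qed
  have "\<exists>c. \<forall>x\<in>ball z0 \<delta>. f x = c"
  proof (rule has_field_derivative_zero_constant)
    fix x assume x: "x \<in> ball z0 \<delta>"
    have "f field_differentiable at x"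
      using holf inU(1)[OF x] by (meson holomorphic_on_imp_differentiable_at mem_ball_0 open_ball)
    hence "(f has_field_derivative deriv f x) (at x)"
      using DERIV_deriv_iff_field_differentiable by blast
    hence "(f has_field_derivative 0) (at x)" using d0[OF inU[OF x]] by simp
    thus "(f has_field_derivative 0) (at x within ball z0 \<delta>)" by (rule has_field_derivative_at_within)
  qed simp
  then obtain c where c: "\<And>x. x \<in> ball z0 \<delta> \<Longrightarrow> f x = c" by blast
  have sub: "ball z0 \<delta> \<subseteq> ball 0 1" using inU(1) by auto
  have all: "f z = c" if "z \<in> ball 0 1" for z
    using analytic_continuation_open[of "ball z0 \<delta>" "ball 0 1" f "\<lambda>_. c" z] dp sub holf c that
    by auto
  show False using all[OF z1] all[OF z2] ne by simp
qed

end
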